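(* Let $(a,b,c,\lambda,\delta)\in(\mathbb F^\times)^4\times\mathbb F$. For any $\triangle_q$-module $V$ and $v\in V$, there exists a $\triangle_q$-module homomorphism $W_\lambda^\delta(a,b,c)\to V$ sending $w_0$ to $v$ if and only if (i) there exists a $\triangle_q$-module homomorphism $M_\lambda(a,b,c)\to V$ sending $m_0$ to $v$, and (ii) $\prod_{i=0}^{d'-1}(A-\theta_i)v=\delta v$.
   Context: $\mathbb F$ is an algebraically closed field and $q\in\mathbb F^\times$ a root of unity of order $d\notin\{1,2,4\}$; $d'=d$ if $d$ odd, $d'=d/2$ if $d$ even. $\triangle_q$ is the unital associative $\mathbb F$-algebra with generators $A,B,C$ subject to: each of $A+\frac{qBC-q^{-1}CB}{q^2-q^{-2}}$, $B+\frac{qCA-q^{-1}AC}{q^2-q^{-2}}$, $C+\frac{qAB-q^{-1}BA}{q^2-q^{-2}}$ is central; $\alpha,\beta,\gamma$ are these times $q+q^{-1}$. For $(a,b,c,\lambda)\in(\mathbb F^\times)^4$, $i\in\mathbb N$: $\theta_i=a\lambda^{-1}q^{2i}+a^{-1}\lambda q^{-2i}$, $\theta_i^*=b\lambda^{-1}q^{2i}+b^{-1}\lambda q^{-2i}$, $\varphi_i=a^{-1}b^{-1}\lambda q(q^i-q^{-i})(\lambda^{-1}q^{i-1}-\lambda q^{1-i})(q^{-i}-abc\lambda^{-1}q^{i-1})(q^{-i}-abc^{-1}\lambda^{-1}q^{i-1})$. $M_\lambda(a,b,c)$ has basis $\{m_i\}_{i\in\mathbb N}$ with $(A-\theta_i)m_i=m_{i+1}$,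 $(B-\theta_i^* )m_i=\varphi_im_{i-1}$, and $\alpha,\beta,\gamma$ acting as $(b+b^{-1})(c+c^{-1})+(a+a^{-1})(\lambda q+\lambda^{-1}q^{-1})$, $(c+c^{-1})(a+a^{-1})+(b+b^{-1})(\lambda q+\lambda^{-1}q^{-1})$, $(a+a^{-1})(b+b^{-1})+(c+c^{-1})(\lambda q+\lambda^{-1}q^{-1})$. For $\delta\in\mathbb F$, $O_\lambda^\delta(a,b,c)$ is the span of $\{\delta m_i-m_{d'+i}\}_{i\in\mathbb N}$ (a submodule), $W_\lambda^\delta(a,b,c)=M_\lambda(a,b,c)/O_\lambda^\delta(a,b,c)$ and $w_i=m_i+O_\lambda^\delta(a,b,c)$. *)

theory Defs
  imports Main "HOL-Computational_Algebra.Polynomial"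
begin

definition alg_closed :: "'f::field itself \<Rightarrow> bool" where
  "alg_closed _ \<longleftrightarrow> (\<forall>p::'f poly. 0 < degree p \<longrightarrow> (\<exists>x. poly p x = 0))"

text \<open>A (candidate) module over the universal Askey-Wilson algebra: an F-vector space
  given on a carrier set, together with the actions of the generators A, B, C.\<close>
record ('f, 'v) tqmod =
  tcar :: "'v set"
  tzero :: 'v
  tadd :: "'v \<Rightarrow> 'v \<Rightarrow> 'v"
  tsmul :: "'f \<Rightarrow> 'v \<Rightarrow> 'v"
  tA :: "'v \<Rightarrow> 'v"
  tB :: "'v \<Rightarrow> 'v"
  tC :: "'v \<Rightarrow> 'v"

definition tsub :: "('f::field, 'v) tqmod \<Rightarrow> 'v \<Rightarrow> 'v \<Rightarrow> 'v" where
  "tsub V x y = tadd V x (tsmul V (-1) y)"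

definition vs_axioms :: "('f::field, 'v) tqmod \<Rightarrow> bool" where
  "vs_axioms V \<longleftrightarrow>
     tzero V \<in> tcar V \<and>
     (\<forall>x\<in>tcar V. \<forall>y\<in>tcar V. tadd V x y \<in> tcar V) \<and>
     (\<forall>c. \<forall>x\<in>tcar V. tsmul V c x \<in> tcar V) \<and>
     (\<forall>x\<in>tcar V. \<forall>y\<in>tcar V. \<forall>z\<in>tcar V. tadd V (tadd V x y) z = tadd V x (tadd V y z)) \<and>
     (\<forall>x\<in>tcar V. \<forall>y\<in>tcar V. tadd V x y = tadd V y x) \<and>
     (\<forall>x\<in>tcar V. tadd V (tzero V) x = x) \<and>
     (\<forall>x\<in>tcar V. \<exists>y\<in>tcar V. tadd V x y = tzero V) \<and>
     (\<forall>c. \<forall>x\<in>tcar V. \<forall>y\<in>tcar V. tsmul V c (tadd V x y) = tadd V (tsmul V c x) (tsmul V c y)) \<and>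
     (\<forall>c e. \<forall>x\<in>tcar V. tsmul V (c + e) x = tadd V (tsmul V c x) (tsmul V e x)) \<and>
     (\<forall>c e. \<forall>x\<in>tcar V. tsmul V (c * e) x = tsmul V c (tsmul V e x)) \<and>
     (\<forall>x\<in>tcar V. tsmul V 1 x = x)"

definition lin_op :: "('f::field, 'v) tqmod \<Rightarrow> ('v \<Rightarrow> 'v) \<Rightarrow> bool" where
  "lin_op V T \<longleftrightarrow> (\<forall>x\<in>tcar V. T x \<in> tcar V) \<and>
     (\<forall>x\<in>tcar V. \<forall>y\<in>tcar V. T (tadd V x y) = tadd V (T x) (T y)) \<and>
     (\<forall>c. \<forall>x\<in>tcar V. T (tsmul V c x) = tsmul V c (T x))"

definition ZA :: "'f::field \<Rightarrow> ('f, 'v) tqmod \<Rightarrow> 'v \<Rightarrow> 'v" where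
  "ZA q V x = tadd V (tA V x) (tsmul V (1 / (q^2 - inverse (q^2)))
      (tsub V (tsmul V q (tB V (tC V x))) (tsmul V (inverse q) (tC V (tB V x)))))"
definition ZB :: "'f::field \<Rightarrow> ('f, 'v) tqmod \<Rightarrow> 'v \<Rightarrow> 'v" where
  "ZB q V x = tadd V (tB V x) (tsmul V (1 / (q^2 - inverse (q^2)))
      (tsub V (tsmul V q (tC V (tA V x))) (tsmul V (inverse q) (tA V (tC V x)))))"
definition ZC :: "'f::field \<Rightarrow> ('f, 'v) tqmod \<Rightarrow> 'v \<Rightarrow> 'v" where
  "ZC q V x = tadd V (tC V x) (tsmul V (1 / (q^2 - inverse (q^2)))
      (tsub V (tsmul V q (tA V (tB V x))) (tsmul V (inverse q) (tB V (tA V x)))))"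

definition commutes_gens :: "('f::field, 'v) tqmod \<Rightarrow> ('v \<Rightarrow> 'v) \<Rightarrow> bool" where
  "commutes_gens V Z \<longleftrightarrow> (\<forall>x\<in>tcar V.
      Z (tA V x) = tA V (Z x) \<and> Z (tB V x) = tB V (Z x) \<and> Z (tC V x) = tC V (Z x))"

definition is_tq_module :: "'f::field \<Rightarrow> ('f, 'v) tqmod \<Rightarrow> bool" where
  "is_tq_module q V \<longleftrightarrow> vs_axioms V \<and> lin_op V (tA V) \<and> lin_op V (tB V) \<and> lin_op V (tC V) \<and>
     commutes_gens V (ZA q V) \<and> commutes_gens V (ZB q V) \<and> commutes_gens V (ZC q V)"

definition is_tq_hom :: "('f::field, 'v) tqmod \<Rightarrow> ('f, 'w) tqmod \<Rightarrow> ('v \<Rightarrow> 'w) \<Rightarrow> bool" where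
  "is_tq_hom V W f \<longleftrightarrow> (\<forall>x\<in>tcar V. f x \<in> tcar W) \<and>
     (\<forall>x\<in>tcar V. \<forall>y\<in>tcar V. f (tadd V x y) = tadd W (f x) (f y)) \<and>
     (\<forall>c. \<forall>x\<in>tcar V. f (tsmul V c x) = tsmul W c (f x)) \<and>
     (\<forall>x\<in>tcar V. f (tA V x) = tA W (f x)) \<and>
     (\<forall>x\<in>tcar V. f (tB V x) = tB W (f x)) \<and>
     (\<forall>x\<in>tcar V. f (tC V x) = tC W (f x))"

definition coset :: "('f::field, 'v) tqmod \<Rightarrow> 'v set \<Rightarrow> 'v \<Rightarrow> 'v set" where
  "coset V U x = {tadd V x u | u. u \<in> U}"

definition rep :: "'v set \<Rightarrow> 'v" where
  "rep X = (SOME x. x \<in> X)"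

definition quot_mod :: "('f::field, 'v) tqmod \<Rightarrow> 'v set \<Rightarrow> ('f, 'v set) tqmod" where
  "quot_mod V U = \<lparr> tcar = coset V U ` tcar V,
     tzero = coset V U (tzero V),
     tadd = (\<lambda>X Y. coset V U (tadd V (rep X) (rep Y))),
     tsmul = (\<lambda>c X. coset V U (tsmul V c (rep X))),
     tA = (\<lambda>X. coset V U (tA V (rep X))),
     tB = (\<lambda>X. coset V U (tB V (rep X))),
     tC = (\<lambda>X. coset V U (tC V (rep X))) \<rparr>"

definition theta :: "'f::field \<Rightarrow> 'f \<Rightarrow> 'f \<Rightarrow> nat \<Rightarrow> 'f" where
  "theta q a l i = a * inverse l * q powi (2 * int i) + inverse a * l * q powi (- 2 * int i)"

definition thetas :: "'f::field \<Rightarrow> 'f \<Rightarrow> 'f \<Rightarrow> nat \<Rightarrow> 'f" where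
  "thetas q b l i = b * inverse l * q powi (2 * int i) + inverse b * l * q powi (- 2 * int i)"

definition phi :: "'f::field \<Rightarrow> 'f \<Rightarrow> 'f \<Rightarrow> 'f \<Rightarrow> 'f \<Rightarrow> nat \<Rightarrow> 'f" where
  "phi q a b c l i = inverse a * inverse b * l * q
     * (q powi int i - q powi (- int i))
     * (inverse l * q powi (int i - 1) - l * q powi (1 - int i))
     * (q powi (- int i) - a * b * c * inverse l * q powi (int i - 1))
     * (q powi (- int i) - a * b * inverse c * inverse l * q powi (int i - 1))"

text \<open>The scalar by which gamma acts on M_lambda(a,b,c).\<close>
definition gam :: "'f::field \<Rightarrow> 'f \<Rightarrow> 'f \<Rightarrow> 'f \<Rightarrow> 'f \<Rightarrow> 'f" where
  "gam q a b c l = (a + inverse a) * (b + inverse b) + (c + inverse c) * (l * q + inverse l * inverse q)"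

text \<open>The module M_lambda(a,b,c): finitely supported coefficient sequences w.r.t. basis m_i.
  C is determined by A, B and the scalar action of gamma.\<close>
definition Mcar :: "(nat \<Rightarrow> 'f::field) set" where
  "Mcar = {x. finite {i. x i \<noteq> 0}}"

definition MA :: "'f::field \<Rightarrow> 'f \<Rightarrow> 'f \<Rightarrow> (nat \<Rightarrow> 'f) \<Rightarrow> nat \<Rightarrow> 'f" where
  "MA q a l x = (\<lambda>j. theta q a l j * x j + (if j = 0 then 0 else x (j - 1)))"

definition MB :: "'f::field \<Rightarrow> 'f \<Rightarrow> 'f \<Rightarrow> 'f \<Rightarrow> 'f \<Rightarrow> (nat \<Rightarrow> 'f) \<Rightarrow> nat \<Rightarrow> 'f" where
  "MB q a b c l x = (\<lambda>j. thetas q b l j * x j + phi q a b c l (Suc j) * x (Suc j))"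

definition MC :: "'f::field \<Rightarrow> 'f \<Rightarrow> 'f \<Rightarrow> 'f \<Rightarrow> 'f \<Rightarrow> (nat \<Rightarrow> 'f) \<Rightarrow> nat \<Rightarrow> 'f" where
  "MC q a b c l x = (\<lambda>j. gam q a b c l / (q + inverse q) * x j
     - 1 / (q^2 - inverse (q^2)) *
       (q * MA q a l (MB q a b c l x) j - inverse q * MB q a b c l (MA q a l x) j))"

definition Mmod :: "'f::field \<Rightarrow> 'f \<Rightarrow> 'f \<Rightarrow> 'f \<Rightarrow> 'f \<Rightarrow> ('f, nat \<Rightarrow> 'f) tqmod" where
  "Mmod q a b c l = \<lparr> tcar = Mcar, tzero = (\<lambda>_. 0),
     tadd = (\<lambda>x y j. x j + y j), tsmul = (\<lambda>e x j. e * x j),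
     tA = MA q a l, tB = MB q a b c l, tC = MC q a b c l \<rparr>"

definition mvec :: "nat \<Rightarrow> nat \<Rightarrow> 'f::field" where
  "mvec i = (\<lambda>j. if j = i then 1 else 0)"

definition dprime :: "nat \<Rightarrow> nat" where
  "dprime d = (if odd d then d else d div 2)"

definition Osub :: "'f::field \<Rightarrow> nat \<Rightarrow> (nat \<Rightarrow> 'f) set" where
  "Osub \<delta> d = {x. \<exists>N (co :: nat \<Rightarrow> 'f).
      x = (\<lambda>j. \<Sum>i<N. co i * (\<delta> * mvec i j - mvec (dprime d + i) j))}"

definition Wmod :: "'f::field \<Rightarrow> 'f \<Rightarrow> 'f \<Rightarrow> 'f \<Rightarrow> 'f \<Rightarrow> 'f \<Rightarrow> nat \<Rightarrow> ('f, (nat \<Rightarrow> 'f) set) tqmod" where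
  "Wmod q a b c l \<delta> d = quot_mod (Mmod q a b c l) (Osub \<delta> d)"

definition wvec :: "'f::field \<Rightarrow> 'f \<Rightarrow> 'f \<Rightarrow> 'f \<Rightarrow> 'f \<Rightarrow> 'f \<Rightarrow> nat \<Rightarrow> nat \<Rightarrow> (nat \<Rightarrow> 'f) set" where
  "wvec q a b c l \<delta> d i = coset (Mmod q a b c l) (Osub \<delta> d) (mvec i)"

fun prodA :: "('f::field, 'v) tqmod \<Rightarrow> (nat \<Rightarrow> 'f) \<Rightarrow> nat \<Rightarrow> 'v \<Rightarrow> 'v" where
  "prodA V th 0 v = v"
| "prodA V th (Suc k) v = tsub V (tA V (prodA V th k v)) (tsmul V (th k) (prodA V th k v))"

end

theory Submission
  imports Defs
begin


definition Ee :: "'f::field \<Rightarrow> nat \<Rightarrow> nat \<Rightarrow> nat \<Rightarrow> 'f" where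
  "Ee \<delta> d i = (\<lambda>j. \<delta> * mvec i j - mvec (dprime d + i) j)"

lemma Osub_alt: "Osub \<delta> d = {x. \<exists>N co. x = (\<lambda>j. \<Sum>i<N. co i * Ee \<delta> d i j)}"
  unfolding Osub_def Ee_def by simp

lemma O_zero: "(\<lambda>j. 0) \<in> Osub \<delta> d"
  unfolding Osub_alt by (rule CollectI, rule exI[of _ 0]) auto

lemma O_E: "Ee \<delta> d k \<in> Osub \<delta> d"
  unfolding Osub_alt
  apply (rule CollectI, rule exI[of _ "Suc k"], rule exI[of _ "\<lambda>i. if i = k then 1 else 0"])
  by (auto simp: if_distrib[where f="\<lambda>x. x * _"] cong: if_cong)

lemma ifz: "(if P then a else 0) * (x::'a::semiring_0) = (if P then a*x else 0)" by simp

lemma pad_sum: "(N::nat) \<le> N' \<Longrightarrow> (\<Sum>i<N'. (if i < N then f i else 0)) = (\<Sum>i<N. f i)"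
proof -
  assume "N \<le> N'"
  have "(\<Sum>i<N'. (if i < N then f i else 0)) = sum f {i\<in>{..<N'}. i < N}"
    using sum.inter_filter[of "{..<N'}" f "\<lambda>i. i < N"] by simp
  also have "{i\<in>{..<N'}. i < N} = {..<N}" using \<open>N \<le> N'\<close> by auto
  finally show ?thesis .
qed

lemma O_add: assumes "u \<in> Osub \<delta> d" "w \<in> Osub \<delta> d" shows "(\<lambda>j. u j + w j) \<in> Osub \<delta> d"
proof -
  obtain N1 co1 where u: "u = (\<lambda>j. \<Sum>i<N1. co1 i * Ee \<delta> d i j)" using assms(1) unfolding Osub_alt by auto
  obtain N2 co2 where w: "w = (\<lambda>j. \<Sum>i<N2. co2 i * Ee \<delta> d i j)" using assms(2) unfolding Osub_alt by auto
  let ?co = "\<lambda>i. (if i < N1 then co1 i else 0) + (if i < N2 then co2 i else 0)"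
  have "(\<lambda>j. u j + w j) = (\<lambda>j. \<Sum>i<N1+N2. ?co i * Ee \<delta> d i j)"
  proof
    fix j
    have "(\<Sum>i<N1+N2. ?co i * Ee \<delta> d i j) = (\<Sum>i<N1+N2. (if i < N1 then co1 i * Ee \<delta> d i j else 0))
        + (\<Sum>i<N1+N2. (if i < N2 then co2 i * Ee \<delta> d i j else 0))"
      by (simp add: distrib_right sum.distrib ifz)
    also have "\<dots> = u j + w j" unfolding u w by (simp add: pad_sum)
    finally show "u j + w j = (\<Sum>i<N1+N2. ?co i * Ee \<delta> d i j)" by simp
  qed
  then show ?thesis unfolding Osub_alt mem_Collect_eq by (intro exI[of _ "N1+N2"] exI[of _ ?co])
qed

lemma O_smul: assumes "u \<in> Osub \<delta> d" shows "(\<lambda>j. s * u j) \<in> Osub \<delta> d"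
proof -
  obtain N co where u: "u = (\<lambda>j. \<Sum>i<N. co i * Ee \<delta> d i j)" using assms(1) unfolding Osub_alt by auto
  have "(\<lambda>j. s * u j) = (\<lambda>j. \<Sum>i<N. (s * co i) * Ee \<delta> d i j)"
    unfolding u by (simp add: sum_distrib_left mult.assoc)
  then show ?thesis unfolding Osub_alt mem_Collect_eq by (intro exI[of _ N] exI[of _ "\<lambda>i. s * co i"])
qed

lemma O_induct:
  assumes "u \<in> Osub \<delta> d" "P (\<lambda>j. 0)"
    "\<And>w s k. w \<in> Osub \<delta> d \<Longrightarrow> P w \<Longrightarrow> P (\<lambda>j. w j + s * Ee \<delta> d k j)"
  shows "P u"
proof -
  obtain N co where u: "u = (\<lambda>j. \<Sum>i<N. co i * Ee \<delta> d i j)" using assms(1) unfolding Osub_alt by auto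
  have "P (\<lambda>j. \<Sum>i<N. co i * Ee \<delta> d i j) \<and> (\<lambda>j. \<Sum>i<N. co i * Ee \<delta> d i j) \<in> Osub \<delta> d"
  proof (induction N)
    case 0 then show ?case using assms(2) O_zero by simp
  next
    case (Suc N)
    have e: "(\<lambda>j. \<Sum>i<Suc N. co i * Ee \<delta> d i j) = (\<lambda>j. (\<Sum>i<N. co i * Ee \<delta> d i j) + co N * Ee \<delta> d N j)"
      by simp
    show ?case unfolding e using Suc assms(3) O_add O_smul O_E by blast
  qed
  then show ?thesis using u by simp
qed

lemma Mcar_add: "x \<in> Mcar \<Longrightarrow> y \<in> Mcar \<Longrightarrow> (\<lambda>j. x j + y j) \<in> Mcar"
  unfolding Mcar_def by (auto intro: finite_subset[of _ "{i. x i \<noteq> 0} \<union> {i. y i \<noteq> 0}"])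

lemma Mcar_smul: "x \<in> Mcar \<Longrightarrow> (\<lambda>j. s * x j) \<in> Mcar"
  unfolding Mcar_def by (auto intro: finite_subset[of _ "{i. x i \<noteq> 0}"])

lemma mvec_Mcar: "mvec i \<in> Mcar"
  unfolding Mcar_def mvec_def by (auto intro: finite_subset[of _ "{i}"])

lemma O_Mcar: "u \<in> Osub \<delta> d \<Longrightarrow> u \<in> Mcar"
  apply (erule O_induct)
  subgoal by (simp add: Mcar_def)
  subgoal for w s k
    apply (rule Mcar_add, assumption, rule Mcar_smul)
    unfolding Ee_def Mcar_def mvec_def mem_Collect_eq by (rule finite_subset[of _ "{k, dprime d + k}"]) auto
  done

lemma MA_Mcar: "x \<in> Mcar \<Longrightarrow> MA q a l x \<in> Mcar"
  unfolding Mcar_def MA_def mem_Collect_eq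
proof (rule finite_subset[of _ "{i. x i \<noteq> 0} \<union> Suc ` {i. x i \<noteq> 0}"])
  show "{j. theta q a l j * x j + (if j = 0 then 0 else x (j - 1)) \<noteq> 0} \<subseteq> {i. x i \<noteq> 0} \<union> Suc ` {i. x i \<noteq> 0}"
  proof
    fix j assume "j \<in> {j. theta q a l j * x j + (if j = 0 then 0 else x (j - 1)) \<noteq> 0}"
    then have "x j \<noteq> 0 \<or> (j \<noteq> 0 \<and> x (j - 1) \<noteq> 0)" by (auto split: if_splits)
    then show "j \<in> {i. x i \<noteq> 0} \<union> Suc ` {i. x i \<noteq> 0}"
    proof
      assume "j \<noteq> 0 \<and> x (j - 1) \<noteq> 0"
      then have "j = Suc (j - 1)" "j - 1 \<in> {i. x i \<noteq> 0}" by auto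
      then show ?thesis by blast
    qed simp
  qed
qed simp

lemma MB_Mcar: "x \<in> Mcar \<Longrightarrow> MB q a b c l x \<in> Mcar"
  unfolding Mcar_def MB_def mem_Collect_eq
proof (rule finite_subset[of _ "{i. x i \<noteq> 0} \<union> (\<lambda>i. i - 1) ` {i. x i \<noteq> 0}"])
  show "{j. thetas q b l j * x j + phi q a b c l (Suc j) * x (Suc j) \<noteq> 0} \<subseteq> {i. x i \<noteq> 0} \<union> (\<lambda>i. i - 1) ` {i. x i \<noteq> 0}"
  proof
    fix j assume "j \<in> {j. thetas q b l j * x j + phi q a b c l (Suc j) * x (Suc j) \<noteq> 0}"
    then have "x j \<noteq> 0 \<or> x (Suc j) \<noteq> 0" by auto
    then show "j \<in> {i. x i \<noteq> 0} \<union> (\<lambda>i. i - 1) ` {i. x i \<noteq> 0}"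
    proof
      assume "x (Suc j) \<noteq> 0"
      then have "j = Suc j - 1" "Suc j \<in> {i. x i \<noteq> 0}" by auto
      then show ?thesis by blast
    qed simp
  qed
qed simp

lemma MC_alt: "MC q a b c l x = (\<lambda>j. gam q a b c l / (q + inverse q) * x j
   + (- (q / (q^2 - inverse (q^2)))) * MA q a l (MB q a b c l x) j
   + (inverse q / (q^2 - inverse (q^2))) * MB q a b c l (MA q a l x) j)"
  unfolding MC_def by (rule ext) (simp add: divide_inverse algebra_simps)

lemma MC_Mcar: "x \<in> Mcar \<Longrightarrow> MC q a b c l x \<in> Mcar"
  unfolding MC_alt
  by (intro Mcar_add Mcar_smul MA_Mcar MB_Mcar)



lemma powi_shift:
  fixes q :: "'f::field"
  assumes q0: "q \<noteq> 0" and e2: "q ^ (2 * D) = 1"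
  shows "q powi (k + int D) = q powi k * q ^ D" and "q powi (k - int D) = q powi k * q ^ D"
proof -
  show "q powi (k + int D) = q powi k * q ^ D"
    using q0 by (simp add: power_int_add)
  have "q ^ D * q ^ D = 1" using e2 by (simp add: power_mult[symmetric] mult_2 power_add)
  then have inv: "inverse (q ^ D) = q ^ D" by (metis inverse_unique)
  have "q powi (k - int D) = q powi k * q powi (- int D)"
    using q0 by (simp add: power_int_diff power_int_minus field_simps)
  also have "q powi (- int D) = inverse (q ^ D)" by (simp add: power_int_minus)
  finally show "q powi (k - int D) = q powi k * q ^ D" using inv by simp
qed

lemma theta_per:
  fixes q :: "'f::field"
  assumes q0: "q \<noteq> 0" and e2: "q ^ (2 * D) = 1"
  shows "theta q a l (i + D) = theta q a l i" "thetas q b l (i + D) = thetas q b l i"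
proof -
  have h1: "q powi (2 * int (i + D)) = q powi (2 * int i)"
  proof -
    have "q powi (2 * int (i + D)) = q powi (2 * int i + int (2*D))" by simp
    also have "\<dots> = q powi (2 * int i) * q powi (int (2*D))" using q0 by (rule power_int_add[OF disjI1])
    also have "\<dots> = q powi (2 * int i) * q ^ (2*D)" by (simp only: power_int_of_nat)
    finally show ?thesis using e2 by simp
  qed
  have h2: "q powi (- 2 * int (i + D)) = q powi (- 2 * int i)"
  proof -
    have "q powi (- 2 * int (i + D)) = q powi (- 2 * int i - int (2*D))" by simp
    also have "\<dots> = q powi (- 2 * int i) * q powi (- int (2*D))" unfolding diff_conv_add_uminus using q0 by (rule power_int_add[OF disjI1])
    also have "q powi (- int (2*D)) = inverse (q ^ (2*D))" by (simp only: power_int_minus power_int_of_nat)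
    also have "\<dots> = 1" using e2 by simp
    also have "q powi (- 2 * int i) * 1 = q powi (- 2 * int i) * q ^ (2*D)" using e2 by simp
    finally show ?thesis using e2 by simp
  qed
  show "theta q a l (i + D) = theta q a l i" "thetas q b l (i + D) = thetas q b l i"
    unfolding theta_def thetas_def using h1 h2 by simp_all
qed

lemma phi_per:
  fixes q :: "'f::field"
  assumes q0: "q \<noteq> 0" and e2: "q ^ (2 * D) = 1"
  shows "phi q a b c l (i + D) = phi q a b c l i"
proof -
  define e where "e = q ^ D"
  have ee: "e * e = 1" using e2 unfolding e_def by (simp add: power_mult[symmetric] mult_2 power_add)
  have s1: "q powi (int (i + D)) = q powi (int i) * e"
    using powi_shift(1)[OF q0 e2, of "int i"] e_def by simp
  have s2: "q powi (- int (i + D)) = q powi (- int i) * e"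
    using powi_shift(2)[OF q0 e2, of "- int i"] e_def by simp
  have s3: "q powi (int (i + D) - 1) = q powi (int i - 1) * e"
    using powi_shift(1)[OF q0 e2, of "int i - 1"] e_def by (simp add: algebra_simps)
  have s4: "q powi (1 - int (i + D)) = q powi (1 - int i) * e"
    using powi_shift(2)[OF q0 e2, of "1 - int i"] e_def by (simp add: algebra_simps)
  have "phi q a b c l (i + D) = (e*e)*(e*e) * phi q a b c l i"
    unfolding phi_def s1 s2 s3 s4 by (simp add: algebra_simps)
  then show ?thesis using ee by simp
qed

lemma phi0: "phi q a b c l 0 = 0" unfolding phi_def by simp



lemma MA_add: "MA q a l (\<lambda>j. x j + y j) = (\<lambda>j. MA q a l x j + MA q a l y j)"
  unfolding MA_def by (rule ext) (simp add: algebra_simps)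
lemma MA_smul: "MA q a l (\<lambda>j. s * x j) = (\<lambda>j. s * MA q a l x j)"
  unfolding MA_def by (rule ext) (simp add: algebra_simps)
lemma MA_zero: "MA q a l (\<lambda>j. 0) = (\<lambda>j. 0)"
  unfolding MA_def by (rule ext) simp
lemma MB_add: "MB q a b c l (\<lambda>j. x j + y j) = (\<lambda>j. MB q a b c l x j + MB q a b c l y j)"
  unfolding MB_def by (rule ext) (simp add: algebra_simps)
lemma MB_smul: "MB q a b c l (\<lambda>j. s * x j) = (\<lambda>j. s * MB q a b c l x j)"
  unfolding MB_def by (rule ext) (simp add: algebra_simps)
lemma MB_zero: "MB q a b c l (\<lambda>j. 0) = (\<lambda>j. 0)"
  unfolding MB_def by (rule ext) simp
lemma MC_add: "MC q a b c l (\<lambda>j. x j + y j) = (\<lambda>j. MC q a b c l x j + MC q a b c l y j)"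
  unfolding MC_alt MA_add MB_add by (rule ext) (simp add: divide_inverse algebra_simps)
lemma MC_smul: "MC q a b c l (\<lambda>j. s * x j) = (\<lambda>j. s * MC q a b c l x j)"
  unfolding MC_alt MA_smul MB_smul by (rule ext) (simp add: divide_inverse algebra_simps)

lemma MA_Ee:
  fixes q :: "'f::field"
  assumes q0: "q \<noteq> 0" and e2: "q ^ (2 * dprime d) = 1"
  shows "MA q a l (Ee \<delta> d i) = (\<lambda>j. theta q a l i * Ee \<delta> d i j + Ee \<delta> d (Suc i) j)"
proof
  fix j
  have t: "theta q a l (dprime d + i) = theta q a l i" using theta_per(1)[OF q0 e2, of a l i] by (simp add: add.commute)
  show "MA q a l (Ee \<delta> d i) j = theta q a l i * Ee \<delta> d i j + Ee \<delta> d (Suc i) j"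
    unfolding MA_def Ee_def mvec_def using t by (cases j) (auto simp: algebra_simps)
qed

lemma MB_Ee:
  fixes q :: "'f::field"
  assumes q0: "q \<noteq> 0" and e2: "q ^ (2 * dprime d) = 1" and D0: "0 < dprime d"
  shows "MB q a b c l (Ee \<delta> d i) = (\<lambda>j. thetas q b l i * Ee \<delta> d i j + phi q a b c l i * Ee \<delta> d (i - 1) j)"
proof
  fix j
  have t: "\<And>i. thetas q b l (dprime d + i) = thetas q b l i" using theta_per(2)[OF q0 e2] by (simp add: add.commute)
  have p: "\<And>i. phi q a b c l (dprime d + i) = phi q a b c l i" using phi_per[OF q0 e2] by (simp add: add.commute)
  have pD: "phi q a b c l (dprime d) = 0" using p[of 0] phi0 by simp
  show "MB q a b c l (Ee \<delta> d i) j = thetas q b l i * Ee \<delta> d i j + phi q a b c l i * Ee \<delta> d (i - 1) j"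
  proof (cases i)
    case 0
    have tD: "thetas q b l (dprime d) = thetas q b l 0" using t[of 0] by simp
    have p0: "phi q a b c l 0 = 0" by (rule phi0)
    show ?thesis unfolding MB_def Ee_def mvec_def using 0 pD D0
      by (auto simp: algebra_simps tD p0)
  next
    case (Suc k)
    have t1: "thetas q b l (Suc (k + dprime d)) = thetas q b l (Suc k)" using t[of "Suc k"] by (simp add: add.commute)
    have p1: "phi q a b c l (Suc (k + dprime d)) = phi q a b c l (Suc k)" using p[of "Suc k"] by (simp add: add.commute)
    show ?thesis unfolding MB_def Ee_def mvec_def using Suc
      by (auto simp: algebra_simps t1 p1)
  qed
qed

context
  fixes q a b c l \<delta> :: "'f::field" and d :: nat
  assumes q0: "q \<noteq> 0" and e2: "q ^ (2 * dprime d) = 1" and D0: "0 < dprime d"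
begin

lemma O_MA: "u \<in> Osub \<delta> d \<Longrightarrow> MA q a l u \<in> Osub \<delta> d"
  apply (erule O_induct)
  subgoal by (simp add: MA_zero O_zero)
  subgoal for w s k
    unfolding MA_add MA_smul MA_Ee[OF q0 e2]
    by (intro O_add O_smul O_E) simp_all
  done

lemma O_MB: "u \<in> Osub \<delta> d \<Longrightarrow> MB q a b c l u \<in> Osub \<delta> d"
  apply (erule O_induct)
  subgoal by (simp add: MB_zero O_zero)
  subgoal for w s k
    unfolding MB_add MB_smul MB_Ee[OF q0 e2 D0]
    by (intro O_add O_smul O_E) simp_all
  done

lemma O_MC: "u \<in> Osub \<delta> d \<Longrightarrow> MC q a b c l u \<in> Osub \<delta> d"
  unfolding MC_alt by (intro O_add O_smul O_MA O_MB)

end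



lemma M_simps:
  "tcar (Mmod q a b c l) = Mcar" "tzero (Mmod q a b c l) = (\<lambda>_. 0)"
  "tadd (Mmod q a b c l) = (\<lambda>x y j. x j + y j)" "tsmul (Mmod q a b c l) = (\<lambda>e x j. e * x j)"
  "tA (Mmod q a b c l) = MA q a l" "tB (Mmod q a b c l) = MB q a b c l" "tC (Mmod q a b c l) = MC q a b c l"
  by (simp_all add: Mmod_def)

lemma W_simps:
  "tcar (Wmod q a b c l \<delta> d) = coset (Mmod q a b c l) (Osub \<delta> d) ` Mcar"
  "tadd (Wmod q a b c l \<delta> d) X Y = coset (Mmod q a b c l) (Osub \<delta> d) (\<lambda>j. rep X j + rep Y j)"
  "tsmul (Wmod q a b c l \<delta> d) s X = coset (Mmod q a b c l) (Osub \<delta> d) (\<lambda>j. s * rep X j)"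
  "tA (Wmod q a b c l \<delta> d) X = coset (Mmod q a b c l) (Osub \<delta> d) (MA q a l (rep X))"
  "tB (Wmod q a b c l \<delta> d) X = coset (Mmod q a b c l) (Osub \<delta> d) (MB q a b c l (rep X))"
  "tC (Wmod q a b c l \<delta> d) X = coset (Mmod q a b c l) (Osub \<delta> d) (MC q a b c l (rep X))"
  by (simp_all add: Wmod_def quot_mod_def M_simps)

lemma coset_M: "coset (Mmod q a b c l) U x = {(\<lambda>j. x j + u j) | u. u \<in> U}"
  unfolding coset_def M_simps by simp

lemma O_neg: "u \<in> Osub \<delta> d \<Longrightarrow> (\<lambda>j. - u j) \<in> Osub \<delta> d"
  using O_smul[of u \<delta> d "-1"] by simp

lemma coset_shift:
  assumes "u \<in> Osub \<delta> d"
  shows "coset (Mmod q a b c l) (Osub \<delta> d) (\<lambda>j. x j + u j) = coset (Mmod q a b c l) (Osub \<delta> d) x"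
proof (unfold coset_M, safe)
  fix u' assume "u' \<in> Osub \<delta> d"
  then have "(\<lambda>j. u j + u' j) \<in> Osub \<delta> d" using O_add assms by blast
  moreover have "(\<lambda>j. x j + u j + u' j) = (\<lambda>j. x j + (u j + u' j))" by (simp add: add.assoc)
  ultimately show "\<exists>w. (\<lambda>j. x j + u j + u' j) = (\<lambda>j. x j + w j) \<and> w \<in> Osub \<delta> d"
    by (intro exI[of _ "\<lambda>j. u j + u' j"] conjI)
next
  fix u' assume "u' \<in> Osub \<delta> d"
  then have "(\<lambda>j. u' j + - u j) \<in> Osub \<delta> d" using O_add O_neg assms by blast
  moreover have "(\<lambda>j. x j + u' j) = (\<lambda>j. x j + u j + (u' j + - u j))" by (simp add: algebra_simps)
  ultimately show "\<exists>w. (\<lambda>j. x j + u' j) = (\<lambda>j. x j + u j + w j) \<and> w \<in> Osub \<delta> d"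
    by (intro exI[of _ "\<lambda>j. u' j + - u j"] conjI)
qed

lemma rep_coset: "\<exists>u\<in>Osub \<delta> d. rep (coset (Mmod q a b c l) (Osub \<delta> d) x) = (\<lambda>j. x j + u j)"
proof -
  have "x \<in> coset (Mmod q a b c l) (Osub \<delta> d) x" unfolding coset_M using O_zero by fastforce
  then have "rep (coset (Mmod q a b c l) (Osub \<delta> d) x) \<in> coset (Mmod q a b c l) (Osub \<delta> d) x"
    unfolding rep_def by (rule someI[where P="\<lambda>z. z \<in> coset (Mmod q a b c l) (Osub \<delta> d) x"])
  then show ?thesis unfolding coset_M by blast
qed

lemma rep_Mcar: "x \<in> Mcar \<Longrightarrow> rep (coset (Mmod q a b c l) (Osub \<delta> d) x) \<in> Mcar"
  using rep_coset[of \<delta> d q a b c l x] Mcar_add O_Mcar by fastforce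

lemma cosT:
  assumes "\<And>u. u \<in> Osub \<delta> d \<Longrightarrow> T u \<in> Osub \<delta> d"
    "\<And>x y. T (\<lambda>j. x j + y j) = (\<lambda>j. T x j + T y j)"
  shows "coset (Mmod q a b c l) (Osub \<delta> d) (T (rep (coset (Mmod q a b c l) (Osub \<delta> d) x)))
       = coset (Mmod q a b c l) (Osub \<delta> d) (T x)"
proof -
  obtain u where u: "u \<in> Osub \<delta> d" "rep (coset (Mmod q a b c l) (Osub \<delta> d) x) = (\<lambda>j. x j + u j)"
    using rep_coset by blast
  show ?thesis unfolding u(2) assms(2) by (rule coset_shift[OF assms(1)[OF u(1)]])
qed

lemma cos_add:
  "coset (Mmod q a b c l) (Osub \<delta> d) (\<lambda>j. rep (coset (Mmod q a b c l) (Osub \<delta> d) x) j + rep (coset (Mmod q a b c l) (Osub \<delta> d) y) j)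
   = coset (Mmod q a b c l) (Osub \<delta> d) (\<lambda>j. x j + y j)"
proof -
  obtain u where u: "u \<in> Osub \<delta> d" "rep (coset (Mmod q a b c l) (Osub \<delta> d) x) = (\<lambda>j. x j + u j)"
    using rep_coset by blast
  obtain w where w: "w \<in> Osub \<delta> d" "rep (coset (Mmod q a b c l) (Osub \<delta> d) y) = (\<lambda>j. y j + w j)"
    using rep_coset by blast
  have e: "(\<lambda>j. x j + u j + (y j + w j)) = (\<lambda>j. (x j + y j) + (u j + w j))" by (simp add: algebra_simps)
  show ?thesis unfolding u(2) w(2) e by (rule coset_shift[OF O_add[OF u(1) w(1)]])
qed

context fixes V :: "('f::field, 'v) tqmod" assumes vs: "vs_axioms V"
begin

lemma Vz: "tzero V \<in> tcar V" using vs unfolding vs_axioms_def by blast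
lemma Vadd: "x \<in> tcar V \<Longrightarrow> y \<in> tcar V \<Longrightarrow> tadd V x y \<in> tcar V" using vs unfolding vs_axioms_def by simp
lemma Vsm: "x \<in> tcar V \<Longrightarrow> tsmul V c x \<in> tcar V" using vs unfolding vs_axioms_def by blast
lemma Vassoc: "x \<in> tcar V \<Longrightarrow> y \<in> tcar V \<Longrightarrow> z \<in> tcar V \<Longrightarrow> tadd V (tadd V x y) z = tadd V x (tadd V y z)"
  using vs unfolding vs_axioms_def by blast
lemma Vcomm: "x \<in> tcar V \<Longrightarrow> y \<in> tcar V \<Longrightarrow> tadd V x y = tadd V y x" using vs unfolding vs_axioms_def by blast
lemma V0add: "x \<in> tcar V \<Longrightarrow> tadd V (tzero V) x = x" using vs unfolding vs_axioms_def by blast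
lemma Vinv: "x \<in> tcar V \<Longrightarrow> \<exists>y\<in>tcar V. tadd V x y = tzero V" using vs unfolding vs_axioms_def by blast
lemma Vdistr: "x \<in> tcar V \<Longrightarrow> tsmul V (c + e) x = tadd V (tsmul V c x) (tsmul V e x)" using vs unfolding vs_axioms_def by blast
lemma Vmul: "x \<in> tcar V \<Longrightarrow> tsmul V (c * e) x = tsmul V c (tsmul V e x)" using vs unfolding vs_axioms_def by blast
lemma Vone: "x \<in> tcar V \<Longrightarrow> tsmul V 1 x = x" using vs unfolding vs_axioms_def by blast

lemma V_add_zero_right: "x \<in> tcar V \<Longrightarrow> tadd V x (tzero V) = x"
  using Vcomm[OF _ Vz] V0add by simp

lemma V_zero_smul: assumes x: "x \<in> tcar V" shows "tsmul V 0 x = tzero V"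
proof -
  have c: "tsmul V 0 x \<in> tcar V" using Vsm x by blast
  have h: "tadd V (tsmul V 0 x) (tsmul V 0 x) = tsmul V 0 x"
    using Vdistr[OF x, of 0 0] by simp
  obtain y where y: "y \<in> tcar V" "tadd V (tsmul V 0 x) y = tzero V" using Vinv[OF c] by blast
  have "tzero V = tadd V (tadd V (tsmul V 0 x) (tsmul V 0 x)) y" using h y by simp
  also have "\<dots> = tadd V (tsmul V 0 x) (tadd V (tsmul V 0 x) y)" using Vassoc c y by blast
  also have "\<dots> = tsmul V 0 x" using y(2) V_add_zero_right c by simp
  finally show ?thesis by simp
qed

lemma V_smul_zero: "tsmul V s (tzero V) = tzero V"
proof -
  have z: "tzero V \<in> tcar V" using vs unfolding vs_axioms_def by blast
  have "tsmul V s (tzero V) = tsmul V s (tsmul V 0 (tzero V))" using V_zero_smul[OF z] by simp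
  also have "\<dots> = tsmul V (s * 0) (tzero V)" using Vmul[OF z] by metis
  also have "\<dots> = tzero V" using V_zero_smul[OF z] by simp
  finally show ?thesis .
qed

lemma V_sub_self: assumes x: "x \<in> tcar V" shows "tadd V x (tsmul V (-1) x) = tzero V"
proof -
  have "tadd V x (tsmul V (-1) x) = tadd V (tsmul V 1 x) (tsmul V (-1) x)" using Vone[OF x] by simp
  also have "\<dots> = tsmul V (1 + -1) x" using Vdistr[OF x] by metis
  also have "\<dots> = tzero V" using V_zero_smul[OF x] by simp
  finally show ?thesis .
qed

end

lemma hom_prodA:
  assumes g: "is_tq_hom (Mmod q a b c l) V g" and x: "x \<in> Mcar"
  shows "prodA (Mmod q a b c l) th k x \<in> Mcar \<and> g (prodA (Mmod q a b c l) th k x) = prodA V th k (g x)"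
proof (induction k)
  case 0 then show ?case using x by simp
next
  case (Suc k)
  let ?y = "prodA (Mmod q a b c l) th k x"
  have y: "?y \<in> Mcar" using Suc by blast
  have gs: "\<forall>c. \<forall>x\<in>Mcar. g (\<lambda>j. c * x j) = tsmul V c (g x)"
    and ga: "\<forall>x\<in>Mcar. \<forall>y\<in>Mcar. g (\<lambda>j. x j + y j) = tadd V (g x) (g y)"
    and gA: "\<forall>x\<in>Mcar. g (MA q a l x) = tA V (g x)"
    using g unfolding is_tq_hom_def M_simps by blast+
  have e: "prodA (Mmod q a b c l) th (Suc k) x = (\<lambda>j. MA q a l ?y j + (-1) * (th k * ?y j))"
    by (simp add: tsub_def M_simps)
  have c1: "MA q a l ?y \<in> Mcar" by (rule MA_Mcar[OF y])
  have c2: "(\<lambda>j. th k * ?y j) \<in> Mcar" by (rule Mcar_smul[OF y])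
  have c3: "(\<lambda>j. (-1) * (th k * ?y j)) \<in> Mcar" by (rule Mcar_smul[OF c2])
  have "g (prodA (Mmod q a b c l) th (Suc k) x) = tadd V (g (MA q a l ?y)) (g (\<lambda>j. (-1) * (th k * ?y j)))"
    unfolding e by (rule ga[rule_format, OF c1 c3])
  also have "\<dots> = tadd V (tA V (g ?y)) (tsmul V (-1) (tsmul V (th k) (g ?y)))"
  proof -
    have h1: "g (\<lambda>j. (-1) * (th k * ?y j)) = tsmul V (-1) (g (\<lambda>j. th k * ?y j))" by (rule gs[rule_format, OF c2])
    have h2: "g (\<lambda>j. th k * ?y j) = tsmul V (th k) (g ?y)" by (rule gs[rule_format, OF y])
    show ?thesis by (simp only: h1 h2 gA[rule_format, OF y])
  qed
  also have "\<dots> = prodA V th (Suc k) (g x)" using Suc by (simp add: tsub_def)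
  finally show ?case unfolding e using Mcar_add[OF c1 c3] by simp
qed

lemma prodA_M_mvec:
  assumes per: "\<forall>i. theta q a l (p + i) = theta q a l i"
  shows "prodA (Mmod q a b c l) (theta q a l) k (\<lambda>j. s * mvec p j) = (\<lambda>j. s * mvec (p + k) j)"
proof (induction k)
  case 0 then show ?case by simp
next
  case (Suc k)
  have t: "theta q a l (p + k) = theta q a l k" using per by blast
  show ?case
  proof
    fix j
    show "prodA (Mmod q a b c l) (theta q a l) (Suc k) (\<lambda>j. s * mvec p j) j = s * mvec (p + Suc k) j"
      using Suc t by (cases j) (auto simp: tsub_def M_simps MA_def mvec_def algebra_simps)
  qed
qed



theorem proposition6p2:
  fixes q a b c l \<delta> :: "'f::field" and d :: nat
    and V :: "('f, 'v) tqmod" and v :: 'v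
  assumes "alg_closed TYPE('f)"
    and "0 < d" and "q ^ d = 1" and "\<forall>n. 0 < n \<and> n < d \<longrightarrow> q ^ n \<noteq> 1"
    and "d \<notin> {1, 2, 4}"
    and "a \<noteq> 0" and "b \<noteq> 0" and "c \<noteq> 0" and "l \<noteq> 0"
    and "is_tq_module q V" and "v \<in> tcar V"
  shows "(\<exists>f. is_tq_hom (Wmod q a b c l \<delta> d) V f \<and> f (wvec q a b c l \<delta> d 0) = v)
     \<longleftrightarrow> ((\<exists>g. is_tq_hom (Mmod q a b c l) V g \<and> g (mvec 0) = v)
          \<and> prodA V (theta q a l) (dprime d) v = tsmul V \<delta> v)"
proof -
  let ?M = "Mmod q a b c l" and ?O = "Osub \<delta> d" and ?W = "Wmod q a b c l \<delta> d"
  let ?D = "dprime d"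
  have q0: "q \<noteq> 0" using assms(2,3) by (metis power_0_left less_not_refl zero_neq_one)
  have e2: "q ^ (2 * ?D) = 1"
  proof (cases "odd d")
    case True then have "q ^ (2 * ?D) = (q ^ d) ^ 2" by (simp add: dprime_def mult.commute[of 2] power_mult)
    then show ?thesis using assms(3) by simp
  next
    case False then have "2 * ?D = d" by (simp add: dprime_def)
    then show ?thesis using assms(3) by simp
  qed
  have D0: "0 < ?D" using assms(2) unfolding dprime_def by auto
  have vs: "vs_axioms V" using assms(10) unfolding is_tq_module_def by blast
  have perD: "\<forall>i. theta q a l (?D + i) = theta q a l i" using theta_per(1)[OF q0 e2] by (simp add: add.commute)
  have per0: "\<forall>i. theta q a l (0 + i) = theta q a l i" by simp
  have m0: "(\<lambda>j. 1 * mvec 0 j) = (mvec 0 :: nat \<Rightarrow> 'f)" by simp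
  have mvD: "(\<lambda>j. \<delta> * mvec 0 j) = (\<lambda>j. mvec ?D j + Ee \<delta> d 0 j)" by (rule ext) (simp add: Ee_def)
  have cosD: "coset ?M ?O (mvec ?D) = coset ?M ?O (\<lambda>j. \<delta> * mvec 0 j)"
    unfolding mvD by (rule coset_shift[OF O_E, symmetric])
  have pM0: "prodA ?M (theta q a l) ?D (mvec 0) = mvec ?D"
    using prodA_M_mvec[OF per0, of b c ?D 1] by simp
  show ?thesis
  proof
    assume "\<exists>f. is_tq_hom ?W V f \<and> f (wvec q a b c l \<delta> d 0) = v"
    then obtain f where f: "is_tq_hom ?W V f" and fv: "f (wvec q a b c l \<delta> d 0) = v" by blast
    have fcar: "\<forall>X\<in>tcar ?W. f X \<in> tcar V"
      and fadd: "\<forall>X\<in>tcar ?W. \<forall>Y\<in>tcar ?W. f (tadd ?W X Y) = tadd V (f X) (f Y)"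
      and fsm: "\<forall>s. \<forall>X\<in>tcar ?W. f (tsmul ?W s X) = tsmul V s (f X)"
      and fA: "\<forall>X\<in>tcar ?W. f (tA ?W X) = tA V (f X)"
      and fB: "\<forall>X\<in>tcar ?W. f (tB ?W X) = tB V (f X)"
      and fC: "\<forall>X\<in>tcar ?W. f (tC ?W X) = tC V (f X)"
      using f unfolding is_tq_hom_def by blast+
    define g where "g = (\<lambda>x. f (coset ?M ?O x))"
    have inW: "\<And>x. x \<in> Mcar \<Longrightarrow> coset ?M ?O x \<in> tcar ?W" unfolding W_simps by blast
    have g: "is_tq_hom ?M V g"
      unfolding is_tq_hom_def M_simps
    proof (intro conjI ballI allI)
      fix x :: "nat \<Rightarrow> 'f" assume x: "x \<in> Mcar"
      show "g x \<in> tcar V" unfolding g_def using fcar inW[OF x] by blast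
      show "g (MA q a l x) = tA V (g x)" 
      proof -
        have "coset ?M ?O (MA q a l (rep (coset ?M ?O x))) = coset ?M ?O (MA q a l x)"
          by (rule cosT[where T="MA q a l"]) (simp_all add: O_MA[OF q0 e2 D0] MA_add)
        then show ?thesis using fA[rule_format, OF inW[OF x]] by (simp add: W_simps g_def)
      qed
      show "g (MB q a b c l x) = tB V (g x)" 
      proof -
        have "coset ?M ?O (MB q a b c l (rep (coset ?M ?O x))) = coset ?M ?O (MB q a b c l x)"
          by (rule cosT[where T="MB q a b c l"]) (simp_all add: O_MB[OF q0 e2 D0] MB_add)
        then show ?thesis using fB[rule_format, OF inW[OF x]] by (simp add: W_simps g_def)
      qed
      show "g (MC q a b c l x) = tC V (g x)" 
      proof -
        have "coset ?M ?O (MC q a b c l (rep (coset ?M ?O x))) = coset ?M ?O (MC q a b c l x)"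
          by (rule cosT[where T="MC q a b c l"]) (simp_all add: O_MC[OF q0 e2 D0] MC_add)
        then show ?thesis using fC[rule_format, OF inW[OF x]] by (simp add: W_simps g_def)
      qed
    next
      fix s :: 'f and x :: "nat \<Rightarrow> 'f" assume x: "x \<in> Mcar"
      have sa: "\<And>x y. (\<lambda>j. s * (\<lambda>j. x j + y j) j) = (\<lambda>j. (\<lambda>j. s * x j) j + (\<lambda>j. s * y j) j)"
        by (simp add: algebra_simps)
      show "g (\<lambda>j. s * x j) = tsmul V s (g x)" 
      proof -
        have "coset ?M ?O (\<lambda>j. s * rep (coset ?M ?O x) j) = coset ?M ?O (\<lambda>j. s * x j)"
          by (rule cosT[where T="\<lambda>x j. s * x j"]) (simp_all add: O_smul algebra_simps)
        then show ?thesis using fsm[rule_format, OF inW[OF x], of s] by (simp add: W_simps g_def)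
      qed
    next
      fix x y :: "nat \<Rightarrow> 'f" assume x: "x \<in> Mcar" and y: "y \<in> Mcar"
      show "g (\<lambda>j. x j + y j) = tadd V (g x) (g y)" unfolding g_def
        using fadd[rule_format, OF inW[OF x] inW[OF y]] cos_add[of q a b c l \<delta> d x y]
        by (simp add: W_simps g_def)
    qed
    have gv: "g (mvec 0) = v" using fv unfolding g_def wvec_def .
    have "prodA V (theta q a l) ?D v = g (prodA ?M (theta q a l) ?D (mvec 0))"
      using hom_prodA[OF g mvec_Mcar] gv by simp
    also have "\<dots> = g (\<lambda>j. \<delta> * mvec 0 j)" unfolding pM0 g_def cosD ..
    also have "\<dots> = tsmul V \<delta> v"
    proof -
      have "\<forall>s. \<forall>x\<in>Mcar. g (\<lambda>j. s * x j) = tsmul V s (g x)" using g unfolding is_tq_hom_def M_simps by blast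
      then show ?thesis using gv mvec_Mcar[of 0] by metis
    qed
    finally show "(\<exists>g. is_tq_hom ?M V g \<and> g (mvec 0) = v) \<and> prodA V (theta q a l) ?D v = tsmul V \<delta> v"
      using g gv by blast
  next
    assume "(\<exists>g. is_tq_hom ?M V g \<and> g (mvec 0) = v) \<and> prodA V (theta q a l) ?D v = tsmul V \<delta> v"
    then obtain g where g: "is_tq_hom ?M V g" and gv: "g (mvec 0) = v"
      and P: "prodA V (theta q a l) ?D v = tsmul V \<delta> v" by blast
    have gcar: "\<forall>x\<in>Mcar. g x \<in> tcar V"
      and gadd: "\<forall>x\<in>Mcar. \<forall>y\<in>Mcar. g (\<lambda>j. x j + y j) = tadd V (g x) (g y)"
      and gsm: "\<forall>s. \<forall>x\<in>Mcar. g (\<lambda>j. s * x j) = tsmul V s (g x)"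
      and gA: "\<forall>x\<in>Mcar. g (MA q a l x) = tA V (g x)"
      and gB: "\<forall>x\<in>Mcar. g (MB q a b c l x) = tB V (g x)"
      and gC: "\<forall>x\<in>Mcar. g (MC q a b c l x) = tC V (g x)"
      using g unfolding is_tq_hom_def M_simps by blast+
    have gE: "g (Ee \<delta> d i) = tzero V" for i
    proof -
      have dm: "(\<lambda>j. \<delta> * mvec i j) = prodA ?M (theta q a l) i (\<lambda>j. \<delta> * mvec 0 j)"
        using prodA_M_mvec[OF per0, of b c i \<delta>] by simp
      have "g (\<lambda>j. \<delta> * mvec i j) = prodA V (theta q a l) i (g (\<lambda>j. \<delta> * mvec 0 j))"
        unfolding dm by (rule conjunct2[OF hom_prodA[OF g Mcar_smul[OF mvec_Mcar]]])
      also have "g (\<lambda>j. \<delta> * mvec 0 j) = tsmul V \<delta> v" using gsm mvec_Mcar gv by auto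
      finally have h1: "g (\<lambda>j. \<delta> * mvec i j) = prodA V (theta q a l) i (tsmul V \<delta> v)" .
      have dm2: "mvec (?D + i) = prodA ?M (theta q a l) i (\<lambda>j. 1 * mvec ?D j)"
        using prodA_M_mvec[OF perD, of b c i 1] by simp
      have "g (mvec (?D + i)) = prodA V (theta q a l) i (g (\<lambda>j. 1 * mvec ?D j))"
        unfolding dm2 by (rule conjunct2[OF hom_prodA[OF g Mcar_smul[OF mvec_Mcar]]])
      also have "g (\<lambda>j. 1 * mvec ?D j) = g (prodA ?M (theta q a l) ?D (mvec 0))" using pM0 by simp
      also have "\<dots> = prodA V (theta q a l) ?D v"
        using hom_prodA[OF g mvec_Mcar] gv by simp
      finally have h2: "g (mvec (?D + i)) = prodA V (theta q a l) i (tsmul V \<delta> v)" using P by simp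
      have y: "g (\<lambda>j. \<delta> * mvec i j) \<in> tcar V" using gcar Mcar_smul[OF mvec_Mcar] by blast
      have eE: "Ee \<delta> d i = (\<lambda>j. (\<lambda>j. \<delta> * mvec i j) j + (\<lambda>j. (-1) * mvec (?D + i) j) j)"
        by (rule ext) (simp add: Ee_def)
      have "g (Ee \<delta> d i) = tadd V (g (\<lambda>j. \<delta> * mvec i j)) (g (\<lambda>j. (-1) * mvec (?D + i) j))"
        unfolding eE by (rule gadd[rule_format, OF Mcar_smul[OF mvec_Mcar] Mcar_smul[OF mvec_Mcar]])
      also have "g (\<lambda>j. (-1) * mvec (?D + i) j) = tsmul V (-1) (g (mvec (?D + i)))"
        by (rule gsm[rule_format, OF mvec_Mcar])
      also have "\<dots> = tsmul V (-1) (g (\<lambda>j. \<delta> * mvec i j))" using h1 h2 by simp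
      finally show ?thesis using V_sub_self[OF vs y] by simp
    qed
    have gO: "u \<in> ?O \<Longrightarrow> g u = tzero V" for u
    proof (erule O_induct)
      have "(\<lambda>j. 0) = (\<lambda>j. 0 * mvec 0 j)" by simp
      then have "g (\<lambda>j. 0) = tsmul V 0 (g (mvec 0))" using gsm[rule_format, OF mvec_Mcar, of 0 0] by simp
      then show "g (\<lambda>j. 0) = tzero V" using V_zero_smul[OF vs] gcar mvec_Mcar by auto
    next
      fix w s k assume w: "w \<in> ?O" and gw: "g w = tzero V"
      have "g (\<lambda>j. w j + s * Ee \<delta> d k j) = tadd V (g w) (g (\<lambda>j. s * Ee \<delta> d k j))"
        by (rule gadd[rule_format, OF O_Mcar[OF w] Mcar_smul[OF O_Mcar[OF O_E]]])
      also have "g (\<lambda>j. s * Ee \<delta> d k j) = tsmul V s (g (Ee \<delta> d k))"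
        by (rule gsm[rule_format, OF O_Mcar[OF O_E]])
      finally show "g (\<lambda>j. w j + s * Ee \<delta> d k j) = tzero V"
        using gw gE V_smul_zero[OF vs] V0add[OF vs Vz[OF vs]] by simp
    qed
    define f where "f = (\<lambda>X. g (rep X))"
    have fcos: "f (coset ?M ?O x) = g x" if x: "x \<in> Mcar" for x
    proof -
      obtain u where u: "u \<in> ?O" "rep (coset ?M ?O x) = (\<lambda>j. x j + u j)"
        using rep_coset by blast
      have "f (coset ?M ?O x) = tadd V (g x) (g u)"
        unfolding f_def u(2) by (rule gadd[rule_format, OF x O_Mcar[OF u(1)]])
      then show ?thesis using gO[OF u(1)] V_add_zero_right[OF vs] gcar x by simp
    qed
    have hom: "is_tq_hom ?W V f"
      unfolding is_tq_hom_def
    proof (intro conjI ballI allI)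
      fix X assume "X \<in> tcar ?W"
      then obtain x where x: "x \<in> Mcar" and X: "X = coset ?M ?O x" unfolding W_simps by blast
      have r: "rep X \<in> Mcar" unfolding X by (rule rep_Mcar[OF x])
      show "f X \<in> tcar V" unfolding f_def using gcar r by blast
      show "f (tA ?W X) = tA V (f X)" unfolding W_simps fcos[OF MA_Mcar[OF r]]
        using gA r f_def by simp
      show "f (tB ?W X) = tB V (f X)" unfolding W_simps fcos[OF MB_Mcar[OF r]]
        using gB r f_def by simp
      show "f (tC ?W X) = tC V (f X)" unfolding W_simps fcos[OF MC_Mcar[OF r]]
        using gC r f_def by simp
    next
      fix s X assume "X \<in> tcar ?W"
      then obtain x where x: "x \<in> Mcar" and X: "X = coset ?M ?O x" unfolding W_simps by blast
      have r: "rep X \<in> Mcar" unfolding X by (rule rep_Mcar[OF x])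
      show "f (tsmul ?W s X) = tsmul V s (f X)" unfolding W_simps fcos[OF Mcar_smul[OF r]]
        using gsm r f_def by simp
    next
      fix X Y assume "X \<in> tcar ?W" "Y \<in> tcar ?W"
      then obtain x y where x: "x \<in> Mcar" and X: "X = coset ?M ?O x"
        and y: "y \<in> Mcar" and Y: "Y = coset ?M ?O y" unfolding W_simps by blast
      have r: "rep X \<in> Mcar" unfolding X by (rule rep_Mcar[OF x])
      have r2: "rep Y \<in> Mcar" unfolding Y by (rule rep_Mcar[OF y])
      show "f (tadd ?W X Y) = tadd V (f X) (f Y)" unfolding W_simps fcos[OF Mcar_add[OF r r2]]
        unfolding f_def by (rule gadd[rule_format, OF r r2])
    qed
    have "f (wvec q a b c l \<delta> d 0) = v" unfolding wvec_def fcos[OF mvec_Mcar] by (rule gv)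
    then show "\<exists>f. is_tq_hom ?W V f \<and> f (wvec q a b c l \<delta> d 0) = v" using hom by blast
  qed
qed


end
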